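(* Consider a hierarchical tensor factorization with mode tree $\mathcal T$ whose weight matrices evolve under gradient flow on $\phi_H$ for $t\ge0$, and assume the unbalancedness magnitude at initialization is $\epsilon\ge0$. Let $L_\nu:=|C(\nu)|+1$. Then for any $\nu\in\mathrm{int}(\mathcal T)$, $r\in[R_\nu]$ and time $t\ge0$ at which $\sigma_{\nu,r}(t)>0$, writing $g(t):=\langle-\nabla\mathcal L_H(\mathcal W_H(t)),\mathcal E_{\nu,r}(t)\rangle$: if $g(t)\ge0$ then $$\frac{\sigma_{\nu,r}(t)^2}{\sigma_{\nu,r}(t)^{2/L_\nu}+\epsilon}\,L_\nu\, g(t)\;\le\;\frac{d}{dt}\sigma_{\nu,r}(t)\;\le\;\big(\sigma_{\nu,r}(t)^{2/L_\nu}+\epsilon\big)^{L_\nu-1}L_\nu\, g(t);$$ and if $g(t)<0$ then $$\big(\sigma_{\nu,r}(t)^{2/L_\nu}+\epsilon\big)^{L_\nu-1}L_\nu\, g(t)\;\le\;\frac{d}{dt}\sigma_{\nu,r}(t)\;\le\;\frac{\sigma_{\nu,r}(t)^2}{\sigma_{\nu,r}(t)^{2/L_\nu}+\epsilon}\,L_\nu\, g(t).$$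
   Context: Fix $N\in\mathbb N$, $D_1,\dots,D_N\in\mathbb N$; $[K]:=\{1,\dots,K\}$. Norms are Frobenius norms, $\langle\cdot,\cdot\rangle$ the entrywise inner product, $\otimes$ the tensor product. A mode tree $\mathcal T$ over $[N]$ is a rooted tree whose nodes are labeled by subsets of $[N]$, with exactly $N$ leaves labeled $\{1\},\dots,\{N\}$, and where each interior node's label is the union of its children's labels; nodes are identified with labels, root $[N]$, $\mathrm{int}(\mathcal T)$ interior nodes, $Pa(\nu)$ parent, $C(\nu)$ children (fixed order). A hierarchical tensor factorization is given by $R_\nu\in\mathbb N$ ($\nu\in\mathrm{int}(\mathcal T)$), with $R_{Pa([N])}:=1$, $R_{\{n\}}:=D_n$, and weight matrices $W^{(\nu)}\in\mathbb R^{R_\nu\times R_{Pa(\nu)}}$. Intermediate tensors: $\mathcal W^{(\{n\},r)}:=W^{(\{n\})}_{:,r}$; for $\nu\in\mathrm{int}(\mathcal T)\setminus\{[N]\}$ (leaves to root), $r\in[R_{Pa(\nu)}]$: $\mathcal W^{(\nu,r)}:=\pi_\nu\big(\sum_{r'=1}^{R_\nu}W^{(\nu)}_{r',r}\bigotimes_{\nu_c\in C(\nu)}\mathcal W^{(\nu_c,r')}\big)$; end tensor $\mathcal W_H:=\pi_{[N]}\big(\sum_{r'=1}^{R_{[N]}}W^{([N])}_{r',1}\bigotimes_{\nu_c\in C([N])}\mathcal W^{(\nu_c,r')}\big)$, where $\pi_\nu$ permutes modes (ordered by children, each child's elements ascending) into ascending order of the elements of $\nu$. $\mathrm{LC}(\nu,r)$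 is the collection of vectors $W^{(\nu)}_{r,:}$ and $W^{(\nu_c)}_{:,r}$, $\nu_c\in C(\nu)$; $\sigma_{\nu,r}:=\prod_{w\in\mathrm{LC}(\nu,r)}\|w\|$ is the norm of the local component $W^{(\nu)}_{r,:}\otimes\bigotimes_{\nu_c}W^{(\nu_c)}_{:,r}$. $\mathcal E_{\nu,r}$ is the end tensor obtained from the same construction except that, for every $r'\in[R_{Pa(\nu)}]$, the tensor produced at node $\nu$ (the end tensor itself if $\nu=[N]$) is replaced by $\pi_\nu\big(\sigma_{\nu,r}^{-1}W^{(\nu)}_{r,r'}\bigotimes_{\nu_c\in C(\nu)}\mathcal W^{(\nu_c,r)}\big)$; $\mathcal E_{\nu,r}:=0$ if $\sigma_{\nu,r}=0$. $\mathcal L_H:\mathbb R^{D_1\times\cdots\times D_N}\to\mathbb R_{\ge0}$ is differentiable and locally smooth, $\phi_H((W^{(\nu)})_\nu):=\mathcal L_H(\mathcal W_H)$, gradient flow: $\frac{d}{dt}W^{(\nu)}(t)=-\frac{\partial}{\partial W^{(\nu)}}\phi_H((W^{(\nu')}(t))_{\nu'})$, $t\ge0$; time-$t$ quantities are computed from the weights at time $t$. The unbalancedness magnitude is $\max_{\nu\in\mathrm{int}(\mathcal T),r\in[R_\nu],w,w'\in\mathrm{LC}(\nu,r)}|\|w\|^2-\|w'\|^2|$. *)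

theory Defs
  imports "HOL-Analysis.Analysis"
begin

text \<open>A tensor in R^(D_1 x ... x D_N) is a function from index assignments (mode n to
  0-based index i n < D n) to reals; only assignments in tidx N D matter.  Modes are
  addressed by their label, so the mode permutations pi_nu are implicit.\<close>

definition tidx :: "nat \<Rightarrow> (nat \<Rightarrow> nat) \<Rightarrow> (nat \<Rightarrow> nat) set" where
  "tidx N D = PiE {1..N} (\<lambda>n. {..<D n})"

definition tinner :: "nat \<Rightarrow> (nat \<Rightarrow> nat) \<Rightarrow> ((nat \<Rightarrow> nat) \<Rightarrow> real) \<Rightarrow> ((nat \<Rightarrow> nat) \<Rightarrow> real) \<Rightarrow> real" where
  "tinner N D X Y = (\<Sum>i\<in>tidx N D. X i * Y i)"

definition tnorm :: "nat \<Rightarrow> (nat \<Rightarrow> nat) \<Rightarrow> ((nat \<Rightarrow> nat) \<Rightarrow> real) \<Rightarrow> real" where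
  "tnorm N D X = sqrt (tinner N D X X)"

definition has_tgrad :: "nat \<Rightarrow> (nat \<Rightarrow> nat) \<Rightarrow> (((nat \<Rightarrow> nat) \<Rightarrow> real) \<Rightarrow> real)
     \<Rightarrow> ((nat \<Rightarrow> nat) \<Rightarrow> real) \<Rightarrow> ((nat \<Rightarrow> nat) \<Rightarrow> real) \<Rightarrow> bool" where
  "has_tgrad N D L G X \<longleftrightarrow>
     (\<forall>e>0. \<exists>d>0. \<forall>H. tnorm N D H < d \<longrightarrow>
        \<bar>L (\<lambda>i. X i + H i) - L X - tinner N D G H\<bar> \<le> e * tnorm N D H)"

definition locally_smooth_grad :: "nat \<Rightarrow> (nat \<Rightarrow> nat)
     \<Rightarrow> (((nat \<Rightarrow> nat) \<Rightarrow> real) \<Rightarrow> ((nat \<Rightarrow> nat) \<Rightarrow> real)) \<Rightarrow> bool" where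
  "locally_smooth_grad N D G \<longleftrightarrow>
     (\<forall>X. \<exists>\<delta>>0. \<exists>K. \<forall>Y Z. tnorm N D (\<lambda>i. Y i - X i) < \<delta> \<longrightarrow> tnorm N D (\<lambda>i. Z i - X i) < \<delta> \<longrightarrow>
         tnorm N D (\<lambda>i. G Y i - G Z i) \<le> K * tnorm N D (\<lambda>i. Y i - Z i))"

text \<open>Nodes are identified with their labels; a mode tree over [N] is a laminar family
  of nonempty subsets of [N] containing [N] and all singletons.\<close>
definition mode_tree :: "nat \<Rightarrow> nat set set \<Rightarrow> bool" where
  "mode_tree N T \<longleftrightarrow> T \<subseteq> Pow {1..N} \<and> {1..N} \<in> T \<and> (\<forall>n\<in>{1..N}. {n} \<in> T) \<and> {} \<notin> T \<and>
     (\<forall>A\<in>T. \<forall>B\<in>T. A \<subseteq> B \<or> B \<subseteq> A \<or> A \<inter> B = {})"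

definition children :: "nat set set \<Rightarrow> nat set \<Rightarrow> nat set set" where
  "children T \<nu> = {\<mu>\<in>T. \<mu> \<subset> \<nu> \<and> \<not> (\<exists>\<kappa>\<in>T. \<mu> \<subset> \<kappa> \<and> \<kappa> \<subset> \<nu>)}"

definition parent :: "nat set set \<Rightarrow> nat set \<Rightarrow> nat set" where
  "parent T \<nu> = (THE \<kappa>. \<kappa> \<in> T \<and> \<nu> \<subset> \<kappa> \<and> (\<forall>\<kappa>'\<in>T. \<nu> \<subset> \<kappa>' \<longrightarrow> \<kappa> \<subseteq> \<kappa>'))"

definition interior :: "nat set set \<Rightarrow> nat set set" where
  "interior T = {\<nu>\<in>T. \<not> (\<exists>n. \<nu> = {n})}"

definition rk :: "(nat set \<Rightarrow> nat) \<Rightarrow> (nat \<Rightarrow> nat) \<Rightarrow> nat set \<Rightarrow> nat" where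
  "rk R D \<nu> = (if \<exists>n. \<nu> = {n} then D (the_elem \<nu>) else R \<nu>)"

definition prk :: "nat \<Rightarrow> nat set set \<Rightarrow> (nat set \<Rightarrow> nat) \<Rightarrow> (nat \<Rightarrow> nat) \<Rightarrow> nat set \<Rightarrow> nat" where
  "prk N T R D \<nu> = (if \<nu> = {1..N} then 1 else rk R D (parent T \<nu>))"

text \<open>Weights: W nu a b is entry (a,b) (0-based) of W^(nu).  tens T rk W c nu r is the
  intermediate tensor W^(nu,r), where summand r' at node mu is multiplied by c mu r'
  (c = 1 gives the ordinary construction).\<close>
function tens :: "nat set set \<Rightarrow> (nat set \<Rightarrow> nat) \<Rightarrow> (nat set \<Rightarrow> nat \<Rightarrow> nat \<Rightarrow> real)
    \<Rightarrow> (nat set \<Rightarrow> nat \<Rightarrow> real) \<Rightarrow> nat set \<Rightarrow> nat \<Rightarrow> (nat \<Rightarrow> nat) \<Rightarrow> real" where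
  "tens T rkf W c \<nu> r i =
     (if finite \<nu> \<and> card \<nu> = 1 then W \<nu> (i (the_elem \<nu>)) r
      else if finite \<nu> \<and> 2 \<le> card \<nu> then
        (\<Sum>r'<rkf \<nu>. c \<nu> r' * W \<nu> r' r * (\<Prod>\<mu>\<in>children T \<nu>. tens T rkf W c \<mu> r' i))
      else 0)"
  by pat_completeness auto
termination
  by (relation "Wellfounded.measure (\<lambda>(T,rkf,W,c,\<nu>,r,i). card \<nu>)")
     (auto simp: children_def intro: psubset_card_mono)

definition end_tensor :: "nat \<Rightarrow> (nat \<Rightarrow> nat) \<Rightarrow> nat set set \<Rightarrow> (nat set \<Rightarrow> nat)
    \<Rightarrow> (nat set \<Rightarrow> nat \<Rightarrow> nat \<Rightarrow> real) \<Rightarrow> (nat \<Rightarrow> nat) \<Rightarrow> real" where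
  "end_tensor N D T R W = tens T (rk R D) W (\<lambda>_ _. 1) {1..N} 0"

text \<open>sigma_{nu,r}: product of the norms of the local-component vectors.\<close>
definition row_sqnorm :: "nat \<Rightarrow> nat set set \<Rightarrow> (nat set \<Rightarrow> nat) \<Rightarrow> (nat \<Rightarrow> nat)
    \<Rightarrow> (nat set \<Rightarrow> nat \<Rightarrow> nat \<Rightarrow> real) \<Rightarrow> nat set \<Rightarrow> nat \<Rightarrow> real" where
  "row_sqnorm N T R D W \<nu> r = (\<Sum>r'<prk N T R D \<nu>. (W \<nu> r r')\<^sup>2)"

definition col_sqnorm :: "(nat set \<Rightarrow> nat) \<Rightarrow> (nat \<Rightarrow> nat)
    \<Rightarrow> (nat set \<Rightarrow> nat \<Rightarrow> nat \<Rightarrow> real) \<Rightarrow> nat set \<Rightarrow> nat \<Rightarrow> real" where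
  "col_sqnorm R D W \<mu> r = (\<Sum>a<rk R D \<mu>. (W \<mu> a r)\<^sup>2)"

definition sigma :: "nat \<Rightarrow> nat set set \<Rightarrow> (nat set \<Rightarrow> nat) \<Rightarrow> (nat \<Rightarrow> nat)
    \<Rightarrow> (nat set \<Rightarrow> nat \<Rightarrow> nat \<Rightarrow> real) \<Rightarrow> nat set \<Rightarrow> nat \<Rightarrow> real" where
  "sigma N T R D W \<nu> r =
     sqrt (row_sqnorm N T R D W \<nu> r) * (\<Prod>\<mu>\<in>children T \<nu>. sqrt (col_sqnorm R D W \<mu> r))"

definition E_tensor :: "nat \<Rightarrow> (nat \<Rightarrow> nat) \<Rightarrow> nat set set \<Rightarrow> (nat set \<Rightarrow> nat)
    \<Rightarrow> (nat set \<Rightarrow> nat \<Rightarrow> nat \<Rightarrow> real) \<Rightarrow> nat set \<Rightarrow> nat \<Rightarrow> (nat \<Rightarrow> nat) \<Rightarrow> real" where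
  "E_tensor N D T R W \<nu> r =
     (if sigma N T R D W \<nu> r = 0 then (\<lambda>_. 0)
      else tens T (rk R D) W
        (\<lambda>\<mu> r'. if \<mu> = \<nu> then (if r' = r then 1 / sigma N T R D W \<nu> r else 0) else 1) {1..N} 0)"

definition LC_sqnorms :: "nat \<Rightarrow> nat set set \<Rightarrow> (nat set \<Rightarrow> nat) \<Rightarrow> (nat \<Rightarrow> nat)
    \<Rightarrow> (nat set \<Rightarrow> nat \<Rightarrow> nat \<Rightarrow> real) \<Rightarrow> nat set \<Rightarrow> nat \<Rightarrow> real set" where
  "LC_sqnorms N T R D W \<nu> r =
     insert (row_sqnorm N T R D W \<nu> r) ((\<lambda>\<mu>. col_sqnorm R D W \<mu> r) ` children T \<nu>)"

definition unbalancedness :: "nat \<Rightarrow> nat set set \<Rightarrow> (nat set \<Rightarrow> nat) \<Rightarrow> (nat \<Rightarrow> nat)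
    \<Rightarrow> (nat set \<Rightarrow> nat \<Rightarrow> nat \<Rightarrow> real) \<Rightarrow> real" where
  "unbalancedness N T R D W =
     Max {\<bar>a - b\<bar> | \<nu> r a b. \<nu> \<in> interior T \<and> r < R \<nu> \<and>
            a \<in> LC_sqnorms N T R D W \<nu> r \<and> b \<in> LC_sqnorms N T R D W \<nu> r}"

definition upd_entry :: "(nat set \<Rightarrow> nat \<Rightarrow> nat \<Rightarrow> real) \<Rightarrow> nat set \<Rightarrow> nat \<Rightarrow> nat \<Rightarrow> real
    \<Rightarrow> (nat set \<Rightarrow> nat \<Rightarrow> nat \<Rightarrow> real)" where
  "upd_entry W \<nu> a b x = W(\<nu> := (W \<nu>)(a := (W \<nu> a)(b := x)))"

definition gradient_flow :: "nat \<Rightarrow> (nat \<Rightarrow> nat) \<Rightarrow> nat set set \<Rightarrow> (nat set \<Rightarrow> nat)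
    \<Rightarrow> (((nat \<Rightarrow> nat) \<Rightarrow> real) \<Rightarrow> real) \<Rightarrow> (real \<Rightarrow> nat set \<Rightarrow> nat \<Rightarrow> nat \<Rightarrow> real) \<Rightarrow> bool" where
  "gradient_flow N D T R L W \<longleftrightarrow>
     (\<forall>t\<ge>0. \<forall>\<nu>\<in>T. \<forall>a<rk R D \<nu>. \<forall>b<prk N T R D \<nu>. \<exists>d.
        ((\<lambda>s. W s \<nu> a b) has_real_derivative d) (at t within {0..}) \<and>
        ((\<lambda>x. L (end_tensor N D T R (upd_entry (W t) \<nu> a b x))) has_real_derivative (- d))
           (at (W t \<nu> a b)))"

end

theory Submission
  imports Defs
begin


declare tens.simps[simp del]

lemma tens_leaf: "finite \<mu> \<Longrightarrow> card \<mu> = 1 \<Longrightarrow> tens T rkf W c \<mu> r i = W \<mu> (i (the_elem \<mu>)) r"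
  by (subst tens.simps) simp

lemma tens_node: "finite \<mu> \<Longrightarrow> 2 \<le> card \<mu> \<Longrightarrow> tens T rkf W c \<mu> r i =
   (\<Sum>r'<rkf \<mu>. c \<mu> r' * W \<mu> r' r * (\<Prod>\<kappa>\<in>children T \<mu>. tens T rkf W c \<kappa> r' i))"
  by (subst tens.simps) simp

lemma tens_other: "\<not> (finite \<mu> \<and> card \<mu> = 1) \<Longrightarrow> \<not> (finite \<mu> \<and> 2 \<le> card \<mu>) \<Longrightarrow> tens T rkf W c \<mu> r i = 0"
  by (subst tens.simps) (cases "finite \<mu>"; simp)

lemma children_sub: "\<kappa> \<in> children T \<mu> \<Longrightarrow> \<kappa> \<in> T \<and> \<kappa> \<subset> \<mu>"
  by (auto simp: children_def)

lemma tens_loc: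
  assumes "\<forall>\<kappa>\<in>T. \<kappa> \<subset> \<mu> \<longrightarrow> W' \<kappa> = W \<kappa> \<and> c' \<kappa> = c \<kappa>"
    and "\<forall>a. W' \<mu> a r = W \<mu> a r" and "c' \<mu> = c \<mu>"
  shows "tens T rkf W' c' \<mu> r i = tens T rkf W c \<mu> r i"
  using assms
proof (induction T rkf W c \<mu> r i rule: tens.induct)
  case (1 T rkf W c \<mu> r i)
  show ?case
  proof (cases "finite \<mu> \<and> card \<mu> = 1")
    case True then show ?thesis using 1(3) by (simp add: tens_leaf)
  next
    case F: False
    show ?thesis
    proof (cases "finite \<mu> \<and> 2 \<le> card \<mu>")
      case True
      have "tens T rkf W' c' \<kappa> r' i = tens T rkf W c \<kappa> r' i" if "r' < rkf \<mu>" "\<kappa> \<in> children T \<mu>" for r' \<kappa>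
      proof -
        have k: "\<kappa> \<in> T" "\<kappa> \<subset> \<mu>" using children_sub[OF that(2)] by auto
        show ?thesis
          apply (rule 1(1)[OF F True _ that(2)])
          using that(1) k 1(2) by auto
      qed
      then show ?thesis using True 1(3,4) by (simp add: tens_node)
    next
      case False then show ?thesis using F by (simp add: tens_other)
    qed
  qed
qed

context
  fixes N :: nat and T :: "nat set set"
  assumes tree: "mode_tree N T"
begin

lemma T_sub: "T \<subseteq> Pow {1..N}" using tree by (simp add: mode_tree_def)
lemma T_fin: "finite T" using T_sub by (meson finite_Pow_iff finite_atLeastAtMost finite_subset)
lemma mem_fin: "\<mu> \<in> T \<Longrightarrow> finite \<mu>" using T_sub by (meson PowD finite_atLeastAtMost finite_subset subsetD)
lemma mem_ne: "\<mu> \<in> T \<Longrightarrow> \<mu> \<noteq> {}" using tree by (auto simp: mode_tree_def)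
lemma mem_sub: "\<mu> \<in> T \<Longrightarrow> \<mu> \<subseteq> {1..N}" using T_sub by auto
lemma lam: "A \<in> T \<Longrightarrow> B \<in> T \<Longrightarrow> A \<subseteq> B \<or> B \<subseteq> A \<or> A \<inter> B = {}"
  using tree by (simp add: mode_tree_def)
lemma root_in: "{1..N} \<in> T" using tree by (simp add: mode_tree_def)
lemma children_fin: "finite (children T \<mu>)"
  using T_fin by (rule finite_subset[rotated]) (auto simp: children_def)

lemma children_disj:
  assumes "\<kappa>1 \<in> children T \<mu>" "\<kappa>2 \<in> children T \<mu>" "\<kappa>1 \<noteq> \<kappa>2" shows "\<kappa>1 \<inter> \<kappa>2 = {}"
proof -
  have a: "\<kappa>1 \<in> T" "\<kappa>2 \<in> T" "\<kappa>1 \<subset> \<mu>" "\<kappa>2 \<subset> \<mu>" using assms(1,2) children_sub by auto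
  have "\<not> \<kappa>1 \<subset> \<kappa>2" using assms(1) a unfolding children_def by auto
  moreover have "\<not> \<kappa>2 \<subset> \<kappa>1" using assms(2) a unfolding children_def by auto
  ultimately show ?thesis using lam[OF a(1,2)] assms(3) by (metis psubsetI)
qed

lemma child_exists:
  assumes "\<nu> \<in> T" "\<nu> \<subset> \<mu>"
  shows "\<exists>\<kappa>\<in>children T \<mu>. \<nu> \<subseteq> \<kappa>"
proof -
  let ?A = "{\<kappa>\<in>T. \<nu> \<subseteq> \<kappa> \<and> \<kappa> \<subset> \<mu>}"
  have f: "finite ?A" using T_fin by simp
  have n: "\<nu> \<in> ?A" using assms by auto
  obtain m where m: "m \<in> ?A" "\<forall>b\<in>?A. m \<le> b \<longrightarrow> m = b"
    using finite_has_maximal2[OF f n] by (elim bexE conjE) auto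
  have m1: "m \<in> T" "m \<subset> \<mu>" using m by auto
  have m2: "\<not> (\<exists>k\<in>T. m \<subset> k \<and> k \<subset> \<mu>)"
  proof
    assume "\<exists>k\<in>T. m \<subset> k \<and> k \<subset> \<mu>"
    then obtain k where "k \<in> T" "m \<subset> k" "k \<subset> \<mu>" by blast
    then show False using m by auto
  qed
  have "m \<in> children T \<mu>" using m1 m2 by (simp add: children_def)
  then show ?thesis using m by auto
qed

lemma parent_child:
  assumes "\<kappa> \<in> children T \<mu>" "\<mu> \<in> T"
  shows "parent T \<kappa> = \<mu>"
  unfolding parent_def
proof (rule the_equality)
  have k: "\<kappa> \<in> T" "\<kappa> \<subset> \<mu>" "\<kappa> \<noteq> {}" using children_sub[OF assms(1)] mem_ne by auto
  show "\<mu> \<in> T \<and> \<kappa> \<subset> \<mu> \<and> (\<forall>\<kappa>'\<in>T. \<kappa> \<subset> \<kappa>' \<longrightarrow> \<mu> \<subseteq> \<kappa>')"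
  proof (intro conjI ballI impI)
    fix k' assume "k' \<in> T" "\<kappa> \<subset> k'"
    have "\<not> (k' \<subset> \<mu>)" using assms(1) \<open>k' \<in> T\<close> \<open>\<kappa> \<subset> k'\<close> unfolding children_def by auto
    moreover have "\<mu> \<inter> k' \<noteq> {}" using k \<open>\<kappa> \<subset> k'\<close> by auto
    ultimately show "\<mu> \<subseteq> k'" using lam[OF assms(2) \<open>k' \<in> T\<close>] by auto
  qed (use assms k in auto)
  fix k' assume "k' \<in> T \<and> \<kappa> \<subset> k' \<and> (\<forall>\<kappa>'\<in>T. \<kappa> \<subset> \<kappa>' \<longrightarrow> k' \<subseteq> \<kappa>')"
  then have h: "k' \<in> T" "\<kappa> \<subset> k'" "k' \<subseteq> \<mu>" using k assms(2) by auto
  have "\<not> (k' \<subset> \<mu>)" using assms(1) h unfolding children_def by auto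
  then show "k' = \<mu>" using h by auto
qed

lemma prk_child:
  assumes "\<kappa> \<in> children T \<mu>" "\<mu> \<in> T"
  shows "prk N T R D \<kappa> = rk R D \<mu>"
proof -
  have "\<kappa> \<noteq> {1..N}" using children_sub[OF assms(1)] mem_sub[OF assms(2)] by auto
  then show ?thesis using parent_child[OF assms] by (simp add: prk_def)
qed

lemma card_ge1: "\<mu> \<in> T \<Longrightarrow> 1 \<le> card \<mu>"
  using mem_fin mem_ne by (simp add: Suc_le_eq card_gt_0_iff)

lemma interior_card: "\<nu> \<in> interior T \<Longrightarrow> 2 \<le> card \<nu>"
proof -
  assume a: "\<nu> \<in> interior T"
  then have "\<nu> \<in> T" "\<not>(\<exists>n. \<nu> = {n})" by (auto simp: interior_def)
  then show ?thesis using card_ge1 mem_fin card_1_singletonE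
    by (metis One_nat_def Suc_1 Suc_leI le_neq_implies_less)
qed


lemma others_indep:
  assumes "\<mu> \<in> T" "\<kappa> \<in> children T \<mu>" "\<nu> \<subseteq> \<kappa>" "\<kappa>' \<in> children T \<mu>" "\<kappa>' \<noteq> \<kappa>"
    and agree: "\<forall>k\<in>T. \<not> k \<subseteq> \<nu> \<longrightarrow> W' k = W k \<and> c' k = c k"
  shows "tens T rkf W' c' \<kappa>' r' i = tens T rkf W c \<kappa>' r' i"
proof -
  have d: "\<kappa> \<inter> \<kappa>' = {}" using children_disj assms(2,4,5) by blast
  have k': "\<kappa>' \<in> T" using children_sub assms(4) by blast
  have "\<not> k \<subseteq> \<nu>" if "k \<in> T" "k \<subseteq> \<kappa>'" for k
  proof
    assume "k \<subseteq> \<nu>"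
    then have "k \<subseteq> \<kappa> \<inter> \<kappa>'" using that assms(3) by auto
    then show False using d mem_ne[OF that(1)] by auto
  qed
  then have a: "\<forall>k\<in>T. k \<subseteq> \<kappa>' \<longrightarrow> W' k = W k \<and> c' k = c k" using agree by blast
  show ?thesis
    apply (rule tens_loc)
    using a k' by auto
qed

lemma top:
  fixes R :: "nat set \<Rightarrow> nat" and D :: "nat \<Rightarrow> nat"
  assumes "\<nu> \<in> T" "\<mu> \<in> T" "\<nu> \<subseteq> \<mu>" "\<mu> = \<nu> \<longrightarrow> r < prk N T R D \<nu>"
  shows "\<exists>\<Phi>. \<forall>W' c'. (\<forall>k\<in>T. \<not> k \<subseteq> \<nu> \<longrightarrow> W' k = W k \<and> c' k = c k) \<longrightarrow>
     tens T (rk R D) W' c' \<mu> r i = (\<Sum>r''<prk N T R D \<nu>. \<Phi> r'' * tens T (rk R D) W' c' \<nu> r'' i)"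
  using assms(2-)
proof (induction "card \<mu>" arbitrary: \<mu> r rule: less_induct)
  case less
  let ?P = "prk N T R D \<nu>"
  show ?case
  proof (cases "\<mu> = \<nu>")
    case True
    then have r: "r < ?P" using less by auto
    show ?thesis
    proof (intro exI allI impI)
      fix W' c'
      have "(\<Sum>r''<?P. (if r'' = r then 1 else 0) * tens T (rk R D) W' c' \<nu> r'' i)
          = (\<Sum>r''<?P. if r'' = r then tens T (rk R D) W' c' \<nu> r'' i else 0)"
        by (rule sum.cong) auto
      also have "\<dots> = tens T (rk R D) W' c' \<nu> r i" using r by (simp add: sum.delta')
      finally show "tens T (rk R D) W' c' \<mu> r i = (\<Sum>r''<?P. (if r'' = r then 1 else 0) * tens T (rk R D) W' c' \<nu> r'' i)"
        using True by simp
    qed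
  next
    case False
    then have sub: "\<nu> \<subset> \<mu>" using less by auto
    obtain \<kappa> where k: "\<kappa> \<in> children T \<mu>" "\<nu> \<subseteq> \<kappa>" using child_exists[OF assms(1) sub] by blast
    have kT: "\<kappa> \<in> T" "\<kappa> \<subset> \<mu>" using children_sub[OF k(1)] by auto
    have fm: "finite \<mu>" using mem_fin less by auto
    have cardk: "card \<kappa> < card \<mu>" using kT fm by (simp add: psubset_card_mono)
    have cm: "2 \<le> card \<mu>" using card_ge1[OF kT(1)] cardk by linarith
    let ?O = "children T \<mu> - {\<kappa>}"
    have "\<forall>r'\<in>{..<rk R D \<mu>}. \<exists>\<Phi>. \<forall>W' c'. (\<forall>k\<in>T. \<not> k \<subseteq> \<nu> \<longrightarrow> W' k = W k \<and> c' k = c k) \<longrightarrow>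
       tens T (rk R D) W' c' \<kappa> r' i = (\<Sum>r''<?P. \<Phi> r'' * tens T (rk R D) W' c' \<nu> r'' i)"
    proof
      fix r' assume r': "r' \<in> {..<rk R D \<mu>}"
      have "\<kappa> = \<nu> \<longrightarrow> r' < ?P" using prk_child[OF _ less(2), of \<nu> R D] k(1) r' by auto
      then show "\<exists>\<Phi>. \<forall>W' c'. (\<forall>k\<in>T. \<not> k \<subseteq> \<nu> \<longrightarrow> W' k = W k \<and> c' k = c k) \<longrightarrow>
       tens T (rk R D) W' c' \<kappa> r' i = (\<Sum>r''<?P. \<Phi> r'' * tens T (rk R D) W' c' \<nu> r'' i)"
        using less(1)[OF cardk kT(1) k(2)] by blast
    qed
    then obtain \<Psi> where \<Psi>: "\<forall>r'\<in>{..<rk R D \<mu>}. \<forall>W' c'. (\<forall>k\<in>T. \<not> k \<subseteq> \<nu> \<longrightarrow> W' k = W k \<and> c' k = c k) \<longrightarrow>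
       tens T (rk R D) W' c' \<kappa> r' i = (\<Sum>r''<?P. \<Psi> r' r'' * tens T (rk R D) W' c' \<nu> r'' i)"
      by (metis bchoice)
    define a where "a r' = c \<mu> r' * W \<mu> r' r * (\<Prod>k'\<in>?O. tens T (rk R D) W c k' r' i)" for r'
    show ?thesis
    proof (intro exI allI impI)
      fix W' c'
      assume ag: "\<forall>k\<in>T. \<not> k \<subseteq> \<nu> \<longrightarrow> W' k = W k \<and> c' k = c k"
      have mu: "W' \<mu> = W \<mu>" "c' \<mu> = c \<mu>" using ag less(2) sub by auto
      have "tens T (rk R D) W' c' \<mu> r i = (\<Sum>r'<rk R D \<mu>. c' \<mu> r' * W' \<mu> r' r *
               (\<Prod>k'\<in>children T \<mu>. tens T (rk R D) W' c' k' r' i))"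
        using fm cm by (rule tens_node)
      also have "\<dots> = (\<Sum>r'<rk R D \<mu>. a r' * tens T (rk R D) W' c' \<kappa> r' i)"
      proof (rule sum.cong[OF refl])
        fix r' assume "r' \<in> {..<rk R D \<mu>}"
        have "(\<Prod>k'\<in>children T \<mu>. tens T (rk R D) W' c' k' r' i)
            = tens T (rk R D) W' c' \<kappa> r' i * (\<Prod>k'\<in>?O. tens T (rk R D) W' c' k' r' i)"
          using k(1) children_fin by (simp add: prod.remove)
        also have "(\<Prod>k'\<in>?O. tens T (rk R D) W' c' k' r' i) = (\<Prod>k'\<in>?O. tens T (rk R D) W c k' r' i)"
          using others_indep[OF less(2) k(1) k(2) _ _ ag] by (intro prod.cong) auto
        finally show "c' \<mu> r' * W' \<mu> r' r * (\<Prod>k'\<in>children T \<mu>. tens T (rk R D) W' c' k' r' i)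
            = a r' * tens T (rk R D) W' c' \<kappa> r' i"
          unfolding a_def mu by simp
      qed
      also have "\<dots> = (\<Sum>r'<rk R D \<mu>. a r' * (\<Sum>r''<?P. \<Psi> r' r'' * tens T (rk R D) W' c' \<nu> r'' i))"
        using \<Psi> ag by (intro sum.cong) auto
      also have "\<dots> = (\<Sum>r''<?P. (\<Sum>r'<rk R D \<mu>. a r' * \<Psi> r' r'') * tens T (rk R D) W' c' \<nu> r'' i)"
        by (simp add: sum_distrib_left sum_distrib_right mult.assoc sum.swap[of _ "{..<?P}"])
      finally show "tens T (rk R D) W' c' \<mu> r i = (\<Sum>r''<?P. (\<Sum>r'<rk R D \<mu>. a r' * \<Psi> r' r'') * tens T (rk R D) W' c' \<nu> r'' i)" .
    qed
  qed
qed

end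



lemma sum_delta_add:
  fixes f g :: "nat \<Rightarrow> real"
  assumes "r < n"
  shows "(\<Sum>k<n. (f k + (if k = r then \<delta> else 0)) * g k) = (\<Sum>k<n. f k * g k) + \<delta> * g r"
proof -
  have "(\<Sum>k<n. (f k + (if k = r then \<delta> else 0)) * g k) = (\<Sum>k<n. f k * g k) + (\<Sum>k<n. if k = r then \<delta> * g k else 0)"
    by (subst sum.distrib[symmetric]) (rule sum.cong, auto simp: distrib_right)
  also have "(\<Sum>k<n. if k = r then \<delta> * g k else 0) = \<delta> * g r" using assms by (simp add: sum.delta')
  finally show ?thesis .
qed

lemma sum_delta_add2:
  fixes f g :: "nat \<Rightarrow> real"
  assumes "r < n"
  shows "(\<Sum>k<n. g k * (f k + (if k = r then \<delta> else 0))) = (\<Sum>k<n. g k * f k) + g r * \<delta>"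
  using sum_delta_add[OF assms, of f \<delta> g] by (simp add: mult.commute)

lemma upd_entry_app: "upd_entry W \<mu> a b x k a' b' = (if k = \<mu> \<and> a' = a \<and> b' = b then x else W k a' b')"
  by (simp add: upd_entry_def)


context
  fixes N :: nat and T :: "nat set set" and R :: "nat set \<Rightarrow> nat" and D :: "nat \<Rightarrow> nat"
    and W :: "nat set \<Rightarrow> nat \<Rightarrow> nat \<Rightarrow> real" and \<nu> :: "nat set" and r :: nat
  assumes tree: "mode_tree N T" and nu: "\<nu> \<in> interior T" and r: "r < R \<nu>"
begin

definition "PhiP \<Phi> \<longleftrightarrow> (\<forall>i W' c'. (\<forall>k\<in>T. \<not> k \<subseteq> \<nu> \<longrightarrow> W' k = W k \<and> c' k = (\<lambda>_. 1)) \<longrightarrow>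
   tens T (rk R D) W' c' {1..N} 0 i = (\<Sum>r''<prk N T R D \<nu>. \<Phi> i r'' * tens T (rk R D) W' c' \<nu> r'' i))"

definition "Phi = (SOME \<Phi>. PhiP \<Phi>)"

lemma nuT: "\<nu> \<in> T" and nu_fin: "finite \<nu>" and nu_card: "2 \<le> card \<nu>" and rk_nu: "rk R D \<nu> = R \<nu>"
  using nu interior_card[OF tree nu] mem_fin[OF tree] by (auto simp: interior_def rk_def)

lemma Phi: "PhiP Phi"
proof -
  have "\<forall>i. \<exists>\<Phi>. \<forall>W' c'. (\<forall>k\<in>T. \<not> k \<subseteq> \<nu> \<longrightarrow> W' k = W k \<and> c' k = (\<lambda>_. 1)) \<longrightarrow>
     tens T (rk R D) W' c' {1..N} 0 i = (\<Sum>r''<prk N T R D \<nu>. \<Phi> r'' * tens T (rk R D) W' c' \<nu> r'' i)"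
  proof
    fix i
    show "\<exists>\<Phi>. \<forall>W' c'. (\<forall>k\<in>T. \<not> k \<subseteq> \<nu> \<longrightarrow> W' k = W k \<and> c' k = (\<lambda>_. 1)) \<longrightarrow>
     tens T (rk R D) W' c' {1..N} 0 i = (\<Sum>r''<prk N T R D \<nu>. \<Phi> r'' * tens T (rk R D) W' c' \<nu> r'' i)"
      by (rule top[OF tree nuT root_in[OF tree] mem_sub[OF tree nuT]]) (simp add: prk_def)
  qed
  then have "\<exists>\<Phi>. PhiP \<Phi>" unfolding PhiP_def by metis
  then show ?thesis unfolding Phi_def by (rule someI_ex)
qed

abbreviation "c1 \<equiv> (\<lambda>(_::nat set) (_::nat). 1::real)"
abbreviation "Pnu \<equiv> prk N T R D \<nu>"
definition "K r' i = (\<Prod>\<kappa>\<in>children T \<nu>. tens T (rk R D) W c1 \<kappa> r' i)"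
definition "Z i = (\<Sum>r''<Pnu. Phi i r'' * W \<nu> r r'' * K r i)"
definition "Vr b i = Phi i b * K r i"
definition "U \<kappa> a i = (if card \<kappa> = 1 then (if i (the_elem \<kappa>) = a then 1 else 0)
   else (\<Prod>k\<in>children T \<kappa>. tens T (rk R D) W c1 k a i))"
definition "Vc \<kappa> a i = (\<Sum>r''<Pnu. Phi i r'' * W \<nu> r r'') * U \<kappa> a i *
   (\<Prod>k\<in>children T \<nu> - {\<kappa>}. tens T (rk R D) W c1 k r i)"

lemma end_rep:
  assumes "\<forall>k\<in>T. \<not> k \<subseteq> \<nu> \<longrightarrow> W' k = W k \<and> c' k = (\<lambda>_. 1)"
  shows "tens T (rk R D) W' c' {1..N} 0 i = (\<Sum>r''<Pnu. Phi i r'' * tens T (rk R D) W' c' \<nu> r'' i)"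
  using Phi assms unfolding PhiP_def by auto

lemma children_same:
  assumes "\<kappa> \<in> children T \<nu>" "\<forall>k\<in>T. k \<subseteq> \<kappa> \<longrightarrow> W' k = W k \<and> c' k = c1 k"
  shows "tens T (rk R D) W' c' \<kappa> r' i = tens T (rk R D) W c1 \<kappa> r' i"
  apply (rule tens_loc) using assms children_sub by auto

lemma nu_unfold:
  "tens T (rk R D) W' c' \<nu> r'' i = (\<Sum>r'<R \<nu>. c' \<nu> r' * W' \<nu> r' r'' *
       (\<Prod>\<kappa>\<in>children T \<nu>. tens T (rk R D) W' c' \<kappa> r' i))"
  using tens_node[OF nu_fin nu_card] rk_nu by simp

lemma row_id:
  assumes b: "b < Pnu"
  shows "end_tensor N D T R (upd_entry W \<nu> r b x) i = end_tensor N D T R W i + (x - W \<nu> r b) * Vr b i"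
proof -
  let ?W' = "upd_entry W \<nu> r b x"
  have ch: "tens T (rk R D) ?W' c1 \<kappa> r' i = tens T (rk R D) W c1 \<kappa> r' i" if "\<kappa> \<in> children T \<nu>" for \<kappa> r'
    apply (rule children_same[OF that])
    using children_sub[OF that] by (auto simp: upd_entry_def)
  have nuW': "tens T (rk R D) ?W' c1 \<nu> r'' i = tens T (rk R D) W c1 \<nu> r'' i + (if r'' = b then (x - W \<nu> r b) * K r i else 0)" for r''
  proof -
    have "tens T (rk R D) ?W' c1 \<nu> r'' i = (\<Sum>r'<R \<nu>. (W \<nu> r' r'' + (if r' = r then (if r'' = b then x - W \<nu> r b else 0) else 0)) * K r' i)"
      unfolding nu_unfold K_def by (intro sum.cong) (auto simp: ch upd_entry_app)
    also have "\<dots> = (\<Sum>r'<R \<nu>. W \<nu> r' r'' * K r' i) + (if r'' = b then x - W \<nu> r b else 0) * K r i"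
      by (rule sum_delta_add[OF r])
    also have "(\<Sum>r'<R \<nu>. W \<nu> r' r'' * K r' i) = tens T (rk R D) W c1 \<nu> r'' i"
      unfolding nu_unfold K_def by simp
    finally show ?thesis by simp
  qed
  have ag: "\<forall>k\<in>T. \<not> k \<subseteq> \<nu> \<longrightarrow> ?W' k = W k \<and> c1 k = (\<lambda>_. 1)" by (auto simp: upd_entry_def)
  have ag0: "\<forall>k\<in>T. \<not> k \<subseteq> \<nu> \<longrightarrow> W k = W k \<and> c1 k = (\<lambda>_. 1)" by auto
  have e0: "end_tensor N D T R W i = (\<Sum>r''<Pnu. Phi i r'' * tens T (rk R D) W c1 \<nu> r'' i)"
    unfolding end_tensor_def by (rule end_rep[OF ag0])
  have "end_tensor N D T R ?W' i = (\<Sum>r''<Pnu. Phi i r'' * tens T (rk R D) ?W' c1 \<nu> r'' i)"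
    unfolding end_tensor_def by (rule end_rep[OF ag])
  also have "\<dots> = (\<Sum>r''<Pnu. (Phi i r'' * tens T (rk R D) W c1 \<nu> r'' i) + (if r'' = b then Phi i b * ((x - W \<nu> r b) * K r i) else 0))"
    by (intro sum.cong) (auto simp: nuW' distrib_left)
  also have "\<dots> = end_tensor N D T R W i + Phi i b * ((x - W \<nu> r b) * K r i)"
    using b by (simp add: sum.distrib sum.delta' e0)
  finally show ?thesis by (simp add: Vr_def)
qed


lemma U_tens_upd:
  assumes k0: "\<kappa>0 \<in> children T \<nu>" and a: "a < rk R D \<kappa>0"
  shows "tens T (rk R D) (upd_entry W \<kappa>0 a r x) c1 \<kappa>0 r' i
     = tens T (rk R D) W c1 \<kappa>0 r' i + (if r' = r then (x - W \<kappa>0 a r) * U \<kappa>0 a i else 0)"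
proof -
  let ?W' = "upd_entry W \<kappa>0 a r x"
  have k0T: "\<kappa>0 \<in> T" using children_sub[OF k0] by auto
  have fin: "finite \<kappa>0" using mem_fin[OF tree k0T] .
  have c1: "1 \<le> card \<kappa>0" using card_ge1[OF tree k0T] .
  show ?thesis
  proof (cases "card \<kappa>0 = 1")
    case True
    then show ?thesis using fin by (auto simp: tens_leaf U_def upd_entry_app)
  next
    case False
    then have c2: "2 \<le> card \<kappa>0" using c1 by linarith
    have ch: "tens T (rk R D) ?W' c1 k a' i = tens T (rk R D) W c1 k a' i" if "k \<in> children T \<kappa>0" for k a'
      apply (rule tens_loc) using children_sub[OF that] by (auto simp: upd_entry_def)
    let ?Q = "\<lambda>a'. \<Prod>k\<in>children T \<kappa>0. tens T (rk R D) W c1 k a' i"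
    have "tens T (rk R D) ?W' c1 \<kappa>0 r' i = (\<Sum>a'<rk R D \<kappa>0. (W \<kappa>0 a' r' + (if a' = a then (if r' = r then x - W \<kappa>0 a r else 0) else 0)) * ?Q a')"
      unfolding tens_node[OF fin c2] by (intro sum.cong) (auto simp: ch upd_entry_app)
    also have "\<dots> = (\<Sum>a'<rk R D \<kappa>0. W \<kappa>0 a' r' * ?Q a') + (if r' = r then x - W \<kappa>0 a r else 0) * ?Q a"
      by (rule sum_delta_add[OF a])
    also have "(\<Sum>a'<rk R D \<kappa>0. W \<kappa>0 a' r' * ?Q a') = tens T (rk R D) W c1 \<kappa>0 r' i"
      unfolding tens_node[OF fin c2] by simp
    finally show ?thesis using False by (simp add: U_def)
  qed
qed

lemma col_id:
  assumes k0: "\<kappa>0 \<in> children T \<nu>" and a: "a < rk R D \<kappa>0"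
  shows "end_tensor N D T R (upd_entry W \<kappa>0 a r x) i = end_tensor N D T R W i + (x - W \<kappa>0 a r) * Vc \<kappa>0 a i"
proof -
  let ?W' = "upd_entry W \<kappa>0 a r x"
  have k0T: "\<kappa>0 \<in> T" "\<kappa>0 \<subset> \<nu>" using children_sub[OF k0] by auto
  have k0ne: "\<kappa>0 \<noteq> {}" using mem_ne[OF tree k0T(1)] .
  let ?Ob = "\<lambda>r'. \<Prod>k\<in>children T \<nu> - {\<kappa>0}. tens T (rk R D) W c1 k r' i"
  have oth: "tens T (rk R D) ?W' c1 k r' i = tens T (rk R D) W c1 k r' i"
    if "k \<in> children T \<nu> - {\<kappa>0}" for k r'
  proof (rule children_same)
    show "k \<in> children T \<nu>" using that by auto
    have d: "k \<inter> \<kappa>0 = {}" using children_disj[OF tree _ k0] that by auto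
    show "\<forall>k'\<in>T. k' \<subseteq> k \<longrightarrow> ?W' k' = W k' \<and> c1 k' = c1 k'"
      using d k0ne by (auto simp: upd_entry_def)
  qed
  have prodW': "(\<Prod>k\<in>children T \<nu>. tens T (rk R D) ?W' c1 k r' i)
      = K r' i + (if r' = r then (x - W \<kappa>0 a r) * U \<kappa>0 a i * ?Ob r else 0)" for r'
  proof -
    have "(\<Prod>k\<in>children T \<nu>. tens T (rk R D) ?W' c1 k r' i)
        = tens T (rk R D) ?W' c1 \<kappa>0 r' i * (\<Prod>k\<in>children T \<nu> - {\<kappa>0}. tens T (rk R D) ?W' c1 k r' i)"
      using k0 children_fin[OF tree] by (simp add: prod.remove)
    also have "(\<Prod>k\<in>children T \<nu> - {\<kappa>0}. tens T (rk R D) ?W' c1 k r' i) = ?Ob r'"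
      using oth by (intro prod.cong) auto
    also have "K r' i = tens T (rk R D) W c1 \<kappa>0 r' i * ?Ob r'"
      unfolding K_def using k0 children_fin[OF tree] by (simp add: prod.remove)
    ultimately show ?thesis by (auto simp: U_tens_upd[OF k0 a] distrib_right)
  qed
  have nuW': "tens T (rk R D) ?W' c1 \<nu> r'' i = tens T (rk R D) W c1 \<nu> r'' i + W \<nu> r r'' * ((x - W \<kappa>0 a r) * U \<kappa>0 a i * ?Ob r)" for r''
  proof -
    have nW: "?W' \<nu> = W \<nu>" using k0T by (auto simp: upd_entry_def)
    have "tens T (rk R D) ?W' c1 \<nu> r'' i = (\<Sum>r'<R \<nu>. W \<nu> r' r'' * (K r' i + (if r' = r then (x - W \<kappa>0 a r) * U \<kappa>0 a i * ?Ob r else 0)))"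
      unfolding nu_unfold nW prodW' by simp
    also have "\<dots> = (\<Sum>r'<R \<nu>. W \<nu> r' r'' * K r' i) + W \<nu> r r'' * ((x - W \<kappa>0 a r) * U \<kappa>0 a i * ?Ob r)"
      by (rule sum_delta_add2[OF r])
    also have "(\<Sum>r'<R \<nu>. W \<nu> r' r'' * K r' i) = tens T (rk R D) W c1 \<nu> r'' i"
      unfolding nu_unfold K_def by simp
    finally show ?thesis .
  qed
  have ag: "\<forall>k\<in>T. \<not> k \<subseteq> \<nu> \<longrightarrow> ?W' k = W k \<and> c1 k = (\<lambda>_. 1)" using k0T by (auto simp: upd_entry_def)
  have ag0: "\<forall>k\<in>T. \<not> k \<subseteq> \<nu> \<longrightarrow> W k = W k \<and> c1 k = (\<lambda>_. 1)" by auto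
  have e0: "end_tensor N D T R W i = (\<Sum>r''<Pnu. Phi i r'' * tens T (rk R D) W c1 \<nu> r'' i)"
    unfolding end_tensor_def by (rule end_rep[OF ag0])
  have "end_tensor N D T R ?W' i = (\<Sum>r''<Pnu. Phi i r'' * tens T (rk R D) ?W' c1 \<nu> r'' i)"
    unfolding end_tensor_def by (rule end_rep[OF ag])
  also have "\<dots> = (\<Sum>r''<Pnu. Phi i r'' * tens T (rk R D) W c1 \<nu> r'' i + (Phi i r'' * W \<nu> r r'') * ((x - W \<kappa>0 a r) * U \<kappa>0 a i * ?Ob r))"
    by (intro sum.cong) (auto simp: nuW' distrib_left)
  also have "\<dots> = end_tensor N D T R W i + (\<Sum>r''<Pnu. Phi i r'' * W \<nu> r r'') * ((x - W \<kappa>0 a r) * U \<kappa>0 a i * ?Ob r)"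
    by (simp add: sum.distrib e0 sum_distrib_right)
  finally show ?thesis by (simp add: Vc_def mult_ac)
qed

lemma row_euler: "(\<Sum>b<Pnu. W \<nu> r b * Vr b i) = Z i"
  unfolding Vr_def Z_def by (intro sum.cong) (auto simp: mult_ac)

lemma U_sum:
  assumes k0: "\<kappa>0 \<in> children T \<nu>" and i: "i \<in> tidx N D"
  shows "(\<Sum>a<rk R D \<kappa>0. W \<kappa>0 a r * U \<kappa>0 a i) = tens T (rk R D) W c1 \<kappa>0 r i"
proof -
  have k0T: "\<kappa>0 \<in> T" using children_sub[OF k0] by auto
  have fin: "finite \<kappa>0" using mem_fin[OF tree k0T] .
  have c1: "1 \<le> card \<kappa>0" using card_ge1[OF tree k0T] .
  show ?thesis
  proof (cases "card \<kappa>0 = 1")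
    case True
    then obtain n where n: "\<kappa>0 = {n}" by (metis card_1_singletonE)
    have "n \<in> {1..N}" using mem_sub[OF tree k0T] n by auto
    then have "i n < D n" using i by (auto simp: tidx_def PiE_def Pi_def)
    have Ul: "U \<kappa>0 a i = (if a = i n then 1 else 0)" for a by (auto simp: U_def n)
    have "(\<Sum>a<rk R D \<kappa>0. W \<kappa>0 a r * U \<kappa>0 a i) = (\<Sum>a<D n. if a = i n then W \<kappa>0 (i n) r else 0)"
      unfolding Ul by (intro sum.cong) (auto simp: rk_def n)
    also have "\<dots> = W \<kappa>0 (i n) r" using \<open>i n < D n\<close> by (simp add: sum.delta)
    finally show ?thesis using n by (simp add: tens_leaf)
  next
    case False
    then have c2: "2 \<le> card \<kappa>0" using c1 by linarith
    show ?thesis using False unfolding tens_node[OF fin c2] U_def by simp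
  qed
qed

lemma col_euler:
  assumes k0: "\<kappa>0 \<in> children T \<nu>" and i: "i \<in> tidx N D"
  shows "(\<Sum>a<rk R D \<kappa>0. W \<kappa>0 a r * Vc \<kappa>0 a i) = Z i"
proof -
  let ?S = "\<Sum>r''<Pnu. Phi i r'' * W \<nu> r r''"
  let ?Ob = "\<Prod>k\<in>children T \<nu> - {\<kappa>0}. tens T (rk R D) W c1 k r i"
  have "(\<Sum>a<rk R D \<kappa>0. W \<kappa>0 a r * Vc \<kappa>0 a i) = ?S * ?Ob * (\<Sum>a<rk R D \<kappa>0. W \<kappa>0 a r * U \<kappa>0 a i)"
    unfolding Vc_def sum_distrib_left by (intro sum.cong) (auto simp: mult_ac)
  also have "\<dots> = ?S * (tens T (rk R D) W c1 \<kappa>0 r i * ?Ob)" by (simp add: U_sum[OF k0 i] mult_ac)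
  also have "tens T (rk R D) W c1 \<kappa>0 r i * ?Ob = K r i"
    unfolding K_def using k0 children_fin[OF tree] by (simp add: prod.remove)
  finally show ?thesis unfolding Z_def by (simp add: sum_distrib_right)
qed

lemma E_id:
  assumes s: "sigma N T R D W \<nu> r \<noteq> 0"
  shows "sigma N T R D W \<nu> r * E_tensor N D T R W \<nu> r i = Z i"
proof -
  let ?s = "sigma N T R D W \<nu> r"
  define cE where "cE = (\<lambda>\<mu> r'. if \<mu> = \<nu> then (if r' = r then 1 / ?s else 0) else (1::real))"
  have E: "E_tensor N D T R W \<nu> r = tens T (rk R D) W cE {1..N} 0"
    using s unfolding E_tensor_def cE_def by simp
  have ag: "\<forall>k\<in>T. \<not> k \<subseteq> \<nu> \<longrightarrow> W k = W k \<and> cE k = (\<lambda>_. 1)" by (auto simp: cE_def)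
  have ch: "tens T (rk R D) W cE k r' i = tens T (rk R D) W c1 k r' i" if "k \<in> children T \<nu>" for k r'
  proof -
    have "\<forall>k'\<in>T. k' \<subseteq> k \<longrightarrow> k' \<noteq> \<nu>" using children_sub[OF that] by auto
    then show ?thesis apply (intro children_same[OF that]) by (auto simp: cE_def)
  qed
  have chp: "(\<Prod>k\<in>children T \<nu>. tens T (rk R D) W cE k r' i) = K r' i" for r'
    unfolding K_def using ch by (intro prod.cong) auto
  have nuE: "tens T (rk R D) W cE \<nu> r'' i = (1 / ?s) * W \<nu> r r'' * K r i" for r''
  proof -
    have "tens T (rk R D) W cE \<nu> r'' i = (\<Sum>r'<R \<nu>. if r' = r then (1 / ?s) * W \<nu> r r'' * K r i else 0)"
      unfolding nu_unfold chp by (intro sum.cong) (auto simp: cE_def)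
    also have "\<dots> = (1 / ?s) * W \<nu> r r'' * K r i" using r by (simp add: sum.delta')
    finally show ?thesis .
  qed
  have "E_tensor N D T R W \<nu> r i = (\<Sum>r''<Pnu. Phi i r'' * ((1 / ?s) * W \<nu> r r'' * K r i))"
    unfolding E using end_rep[OF ag] nuE by simp
  then show ?thesis using s unfolding Z_def by (simp add: sum_distrib_left mult_ac)
qed

end






lemma tinner_scale: "tinner N D G (\<lambda>i. h * V i) = h * tinner N D G V"
  by (simp add: tinner_def sum_distrib_left mult_ac)

lemma tnorm_scale: "tnorm N D (\<lambda>i. h * V i) = \<bar>h\<bar> * tnorm N D V"
proof -
  have "tinner N D (\<lambda>i. h * V i) (\<lambda>i. h * V i) = h\<^sup>2 * tinner N D V V"
    by (simp add: tinner_def sum_distrib_left power2_eq_square mult_ac)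
  then show ?thesis by (simp add: tnorm_def real_sqrt_mult)
qed

lemma tnorm_nonneg: "0 \<le> tnorm N D V"
  by (simp add: tnorm_def tinner_def sum_nonneg)

lemma deriv_line:
  assumes g: "has_tgrad N D L Gg X"
  shows "((\<lambda>x. L (\<lambda>i. X i + (x - x0) * V i)) has_real_derivative tinner N D Gg V) (at x0)"
proof -
  let ?f = "\<lambda>x. L (\<lambda>i. X i + (x - x0) * V i)"
  let ?n = "tnorm N D V"
  have n0: "0 \<le> ?n" by (rule tnorm_nonneg)
  have fx0: "?f x0 = L X" by simp
  show ?thesis unfolding DERIV_def LIM_eq
  proof (intro allI impI)
    fix e :: real assume e: "0 < e"
    define e' where "e' = e / (2 * (?n + 1))"
    have e'0: "0 < e'" using e n0 by (simp add: e'_def)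
    obtain d where d: "d > 0" "\<forall>H. tnorm N D H < d \<longrightarrow> \<bar>L (\<lambda>i. X i + H i) - L X - tinner N D Gg H\<bar> \<le> e' * tnorm N D H"
      using g e'0 unfolding has_tgrad_def by blast
    show "\<exists>s>0. \<forall>h. h \<noteq> 0 \<and> norm (h - 0) < s \<longrightarrow> norm ((?f (x0 + h) - ?f x0) / h - tinner N D Gg V) < e"
    proof (intro exI conjI allI impI)
      show "0 < d / (?n + 1)" using d n0 by simp
      fix h :: real assume h: "h \<noteq> 0 \<and> norm (h - 0) < d / (?n + 1)"
      have hn: "\<bar>h\<bar> * ?n < d"
      proof -
        have "\<bar>h\<bar> * ?n \<le> \<bar>h\<bar> * (?n + 1)" by (simp add: mult_left_mono)
        also have "\<dots> < d" using h n0 by (simp add: pos_less_divide_eq)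
        finally show ?thesis .
      qed
      let ?H = "\<lambda>i. h * V i"
      have b: "\<bar>L (\<lambda>i. X i + ?H i) - L X - tinner N D Gg ?H\<bar> \<le> e' * (\<bar>h\<bar> * ?n)"
        using d(2)[rule_format, of ?H] hn by (simp add: tnorm_scale)
      have "(?f (x0 + h) - ?f x0) / h - tinner N D Gg V = (L (\<lambda>i. X i + ?H i) - L X - tinner N D Gg ?H) / h"
        using h by (simp add: tinner_scale field_simps)
      then have "norm ((?f (x0 + h) - ?f x0) / h - tinner N D Gg V) = \<bar>L (\<lambda>i. X i + ?H i) - L X - tinner N D Gg ?H\<bar> / \<bar>h\<bar>"
        by simp
      also have "\<dots> \<le> e' * ?n"
      proof -
        have "0 < \<bar>h\<bar>" using h by simp
        then show ?thesis using b by (simp add: pos_divide_le_eq mult_ac)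
      qed
      also have "\<dots> < e"
      proof -
        have "e' * ?n \<le> e' * (?n + 1)" using e'0 by simp
        also have "\<dots> = e / 2"
        proof -
          have "2 * ?n + 2 \<noteq> 0" "?n + 1 \<noteq> 0" using n0 by linarith+
          then show ?thesis by (simp add: e'_def field_simps)
        qed
        finally show ?thesis using e by simp
      qed
      finally show "norm ((?f (x0 + h) - ?f x0) / h - tinner N D Gg V) < e" .
    qed
  qed
qed

lemma entry_deriv:
  assumes g: "has_tgrad N D L Gg (end_tensor N D T R Ws)"
    and aff: "\<forall>x i. end_tensor N D T R (upd_entry Ws \<mu> a b x) i = end_tensor N D T R Ws i + (x - Ws \<mu> a b) * V i"
    and fl: "((\<lambda>s. W s \<mu> a b) has_real_derivative d) F"
    and fl2: "((\<lambda>x. L (end_tensor N D T R (upd_entry Ws \<mu> a b x))) has_real_derivative (- d)) (at (Ws \<mu> a b))"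
  shows "((\<lambda>s. W s \<mu> a b) has_real_derivative (- tinner N D Gg V)) F"
proof -
  have "(\<lambda>x. L (end_tensor N D T R (upd_entry Ws \<mu> a b x))) = (\<lambda>x. L (\<lambda>i. end_tensor N D T R Ws i + (x - Ws \<mu> a b) * V i))"
    using aff by (intro ext arg_cong[where f = L]) auto
  then have "((\<lambda>x. L (end_tensor N D T R (upd_entry Ws \<mu> a b x))) has_real_derivative tinner N D Gg V) (at (Ws \<mu> a b))"
    using deriv_line[OF g] by simp
  then have "- d = tinner N D Gg V" using fl2 DERIV_unique by blast
  then show ?thesis using fl by (metis minus_minus)
qed

lemma sq_sum_deriv:
  fixes w :: "'b \<Rightarrow> real \<Rightarrow> real"
  assumes fin: "finite S"
    and dv: "\<forall>b\<in>S. ((\<lambda>s. w b s) has_real_derivative (- tinner N D Gg (V b))) (at s0 within A)"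
    and eu: "\<forall>i\<in>tidx N D. (\<Sum>b\<in>S. w b s0 * V b i) = Y i"
  shows "((\<lambda>s. \<Sum>b\<in>S. (w b s)\<^sup>2) has_real_derivative (- 2 * tinner N D Gg Y)) (at s0 within A)"
proof -
  have "((\<lambda>s. \<Sum>b\<in>S. (w b s)\<^sup>2) has_real_derivative (\<Sum>b\<in>S. 2 * ((- tinner N D Gg (V b)) * w b s0))) (at s0 within A)"
    apply (rule DERIV_sum)
    using DERIV_power[OF dv[rule_format], of _ 2] by simp
  moreover have "(\<Sum>b\<in>S. 2 * ((- tinner N D Gg (V b)) * w b s0)) = - 2 * tinner N D Gg Y"
  proof -
    have "(\<Sum>b\<in>S. 2 * ((- tinner N D Gg (V b)) * w b s0)) = - 2 * (\<Sum>i\<in>tidx N D. Gg i * (\<Sum>b\<in>S. w b s0 * V b i))"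
      by (simp add: tinner_def sum_distrib_left sum_distrib_right sum_negf mult_ac sum.swap[of _ S])
    also have "\<dots> = - 2 * tinner N D Gg Y" using eu by (simp add: tinner_def)
    finally show ?thesis .
  qed
  ultimately show ?thesis by simp
qed



definition qf :: "nat \<Rightarrow> nat set set \<Rightarrow> (nat set \<Rightarrow> nat) \<Rightarrow> (nat \<Rightarrow> nat) \<Rightarrow> (real \<Rightarrow> nat set \<Rightarrow> nat \<Rightarrow> nat \<Rightarrow> real)
   \<Rightarrow> nat set \<Rightarrow> nat \<Rightarrow> nat set \<Rightarrow> real \<Rightarrow> real" where
  "qf N T R D W \<nu> r j s = (if j = \<nu> then row_sqnorm N T R D (W s) \<nu> r else col_sqnorm R D (W s) j r)"

lemma q_deriv:
  assumes tree: "mode_tree N T" and nu: "\<nu> \<in> interior T" and r: "r < R \<nu>"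
    and L_grad: "\<forall>X. has_tgrad N D L (G X) X"
    and flow: "gradient_flow N D T R L W"
    and s: "0 \<le> s" and j: "j \<in> insert \<nu> (children T \<nu>)"
  shows "((\<lambda>s. qf N T R D W \<nu> r j s) has_real_derivative
     (- 2 * tinner N D (G (end_tensor N D T R (W s))) (Z N T R D (W s) \<nu> r))) (at s within {0..})"
proof -
  have nuT: "\<nu> \<in> T" using nu by (simp add: interior_def)
  have rknu: "rk R D \<nu> = R \<nu>" using nu by (auto simp: interior_def rk_def)
  let ?Gg = "G (end_tensor N D T R (W s))"
  have fl: "\<And>\<mu> a b. \<mu> \<in> T \<Longrightarrow> a < rk R D \<mu> \<Longrightarrow> b < prk N T R D \<mu> \<Longrightarrow> \<exists>d.
        ((\<lambda>s. W s \<mu> a b) has_real_derivative d) (at s within {0..}) \<and>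
        ((\<lambda>x. L (end_tensor N D T R (upd_entry (W s) \<mu> a b x))) has_real_derivative (- d))
           (at (W s \<mu> a b))"
    using flow s unfolding gradient_flow_def by blast
  show ?thesis
  proof (cases "j = \<nu>")
    case True
    have q: "(\<lambda>s. qf N T R D W \<nu> r j s) = (\<lambda>s. \<Sum>b\<in>{..<prk N T R D \<nu>}. (W s \<nu> r b)\<^sup>2)"
      using True by (simp add: qf_def row_sqnorm_def)
    have dv: "\<forall>b\<in>{..<prk N T R D \<nu>}. ((\<lambda>s. W s \<nu> r b) has_real_derivative (- tinner N D ?Gg (Vr N T R D (W s) \<nu> r b))) (at s within {0..})"
    proof
      fix b assume b: "b \<in> {..<prk N T R D \<nu>}"
      obtain d where d: "((\<lambda>s. W s \<nu> r b) has_real_derivative d) (at s within {0..})"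
        "((\<lambda>x. L (end_tensor N D T R (upd_entry (W s) \<nu> r b x))) has_real_derivative (- d)) (at (W s \<nu> r b))"
        using fl[OF nuT, of r b] r b rknu by auto
      show "((\<lambda>s. W s \<nu> r b) has_real_derivative (- tinner N D ?Gg (Vr N T R D (W s) \<nu> r b))) (at s within {0..})"
        apply (rule entry_deriv[where Ws="W s" and W=W and V="Vr N T R D (W s) \<nu> r b" and Gg="?Gg", OF _ _ d(1) d(2)])
        using L_grad row_id[where R=R and D=D, OF tree nu r] b by auto
    qed
    show ?thesis unfolding q
      apply (rule sq_sum_deriv[OF _ dv])
      using row_euler[where R=R and D=D, OF tree nu r] by auto
  next
    case False
    then have k: "j \<in> children T \<nu>" using j by auto
    have q: "(\<lambda>s. qf N T R D W \<nu> r j s) = (\<lambda>s. \<Sum>a\<in>{..<rk R D j}. (W s j a r)\<^sup>2)"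
      using False by (simp add: qf_def col_sqnorm_def)
    have jT: "j \<in> T" using children_sub[OF k] by auto
    have pj: "prk N T R D j = R \<nu>" using prk_child[OF tree k nuT] rknu by simp
    have dv: "\<forall>a\<in>{..<rk R D j}. ((\<lambda>s. W s j a r) has_real_derivative (- tinner N D ?Gg (Vc N T R D (W s) \<nu> r j a))) (at s within {0..})"
    proof
      fix a assume a: "a \<in> {..<rk R D j}"
      obtain d where d: "((\<lambda>s. W s j a r) has_real_derivative d) (at s within {0..})"
        "((\<lambda>x. L (end_tensor N D T R (upd_entry (W s) j a r x))) has_real_derivative (- d)) (at (W s j a r))"
        using fl[OF jT, of a r] r a pj by auto
      show "((\<lambda>s. W s j a r) has_real_derivative (- tinner N D ?Gg (Vc N T R D (W s) \<nu> r j a))) (at s within {0..})"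
        apply (rule entry_deriv[where Ws="W s" and W=W and V="Vc N T R D (W s) \<nu> r j a" and Gg="?Gg", OF _ _ d(1) d(2)])
        using L_grad col_id[where R=R and D=D, OF tree nu r k] a by auto
    qed
    show ?thesis unfolding q
      apply (rule sq_sum_deriv[OF _ dv])
      using col_euler[where R=R and D=D, OF tree nu r k] by auto
  qed
qed

lemma conserve:
  assumes tree: "mode_tree N T" and nu: "\<nu> \<in> interior T" and r: "r < R \<nu>"
    and L_grad: "\<forall>X. has_tgrad N D L (G X) X"
    and flow: "gradient_flow N D T R L W"
    and t: "0 \<le> t" and j: "j \<in> insert \<nu> (children T \<nu>)" and k: "k \<in> insert \<nu> (children T \<nu>)"
  shows "qf N T R D W \<nu> r j t - qf N T R D W \<nu> r k t = qf N T R D W \<nu> r j 0 - qf N T R D W \<nu> r k 0"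
proof -
  let ?f = "\<lambda>s. qf N T R D W \<nu> r j s - qf N T R D W \<nu> r k s"
  have "\<And>x. x \<in> {0..t} \<Longrightarrow> (?f has_real_derivative 0) (at x within {0..t})"
  proof -
    fix x assume x: "x \<in> {0..t}"
    have "(?f has_real_derivative 0) (at x within {0..})"
      using DERIV_diff[OF q_deriv[OF tree nu r L_grad flow _ j] q_deriv[OF tree nu r L_grad flow _ k]] x by simp
    then show "(?f has_real_derivative 0) (at x within {0..t})" by (rule DERIV_subset) auto
  qed
  then obtain c where "\<forall>x\<in>{0..t}. ?f x = c" using has_field_derivative_zero_constant[of "{0..t}" ?f] by auto
  then show ?thesis using t by auto
qed



lemma final_bounds:
  fixes q :: "'a \<Rightarrow> real"
  assumes fin: "finite J" and pos: "\<forall>j\<in>J. 0 < q j" and le: "\<forall>j\<in>J. q j \<le> S"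
  shows "(0 \<le> g \<longrightarrow> prod q J / S * real (card J) * g \<le> (\<Sum>j\<in>J. g * prod q (J - {j})) \<and>
            (\<Sum>j\<in>J. g * prod q (J - {j})) \<le> S ^ (card J - 1) * real (card J) * g) \<and>
         (g < 0 \<longrightarrow> S ^ (card J - 1) * real (card J) * g \<le> (\<Sum>j\<in>J. g * prod q (J - {j})) \<and>
            (\<Sum>j\<in>J. g * prod q (J - {j})) \<le> prod q J / S * real (card J) * g)"
proof -
  have lo: "prod q J / S \<le> prod q (J - {j})" if j: "j \<in> J" for j
  proof -
    have e: "prod q J = q j * prod q (J - {j})" using fin j by (simp add: prod.remove)
    have p: "0 \<le> prod q (J - {j})" using pos by (intro prod_nonneg) auto
    have "q j * prod q (J - {j}) \<le> S * prod q (J - {j})" using le j p by (simp add: mult_right_mono)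
    moreover have "0 < S" using pos le j by force
    ultimately show ?thesis unfolding e by (simp add: pos_divide_le_eq mult.commute)
  qed
  have hi: "prod q (J - {j}) \<le> S ^ (card J - 1)" if j: "j \<in> J" for j
  proof -
    have "prod q (J - {j}) \<le> (\<Prod>k\<in>J - {j}. S)" using pos le by (intro prod_mono) (auto intro: less_imp_le)
    also have "\<dots> = S ^ (card J - 1)" using fin j by (simp add: card_Diff_singleton)
    finally show ?thesis .
  qed
  have s1: "(\<Sum>j\<in>J. c) = c * real (card J)" for c :: real by simp
  show ?thesis
  proof (intro conjI impI)
    assume g: "0 \<le> g"
    have "(\<Sum>j\<in>J. g * (prod q J / S)) \<le> (\<Sum>j\<in>J. g * prod q (J - {j}))"
      using lo g by (intro sum_mono mult_left_mono) auto
    then show "prod q J / S * real (card J) * g \<le> (\<Sum>j\<in>J. g * prod q (J - {j}))" by (simp add: mult_ac)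
    have "(\<Sum>j\<in>J. g * prod q (J - {j})) \<le> (\<Sum>j\<in>J. g * S ^ (card J - 1))"
      using hi g by (intro sum_mono mult_left_mono) auto
    then show "(\<Sum>j\<in>J. g * prod q (J - {j})) \<le> S ^ (card J - 1) * real (card J) * g" by (simp add: mult_ac)
  next
    assume g: "g < 0"
    have "(\<Sum>j\<in>J. g * S ^ (card J - 1)) \<le> (\<Sum>j\<in>J. g * prod q (J - {j}))"
      using hi g by (intro sum_mono mult_left_mono_neg) auto
    then show "S ^ (card J - 1) * real (card J) * g \<le> (\<Sum>j\<in>J. g * prod q (J - {j}))" by (simp add: mult_ac)
    have "(\<Sum>j\<in>J. g * prod q (J - {j})) \<le> (\<Sum>j\<in>J. g * (prod q J / S))"
      using lo g by (intro sum_mono mult_left_mono_neg) auto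
    then show "(\<Sum>j\<in>J. g * prod q (J - {j})) \<le> prod q J / S * real (card J) * g" by (simp add: mult_ac)
  qed
qed

lemma min_bound:
  fixes q :: "'a \<Rightarrow> real"
  assumes fin: "finite J" and ne: "J \<noteq> {}" and pos: "\<forall>j\<in>J. 0 < q j"
    and bal: "\<forall>j\<in>J. \<forall>k\<in>J. \<bar>q j - q k\<bar> \<le> \<epsilon>" and sp: "0 < \<sigma>" and s2: "\<sigma>\<^sup>2 = prod q J"
  shows "\<forall>j\<in>J. q j \<le> \<sigma> powr (2 / real (card J)) + \<epsilon>"
proof -
  define m where "m = Min (q ` J)"
  have mJ: "m \<in> q ` J" unfolding m_def using fin ne by simp
  then obtain j0 where j0: "j0 \<in> J" "m = q j0" by auto
  have mle: "\<forall>j\<in>J. m \<le> q j" unfolding m_def using fin by simp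
  have m0: "0 < m" using pos j0 by simp
  let ?L = "card J"
  have L0: "0 < ?L" using fin ne by (simp add: card_gt_0_iff)
  have "m ^ ?L = (\<Prod>j\<in>J. m)" by simp
  also have "\<dots> \<le> prod q J" using mle m0 by (intro prod_mono) auto
  finally have mL: "m ^ ?L \<le> \<sigma>\<^sup>2" using s2 by simp
  have "m = (m powr real ?L) powr (1 / real ?L)" using L0 m0 by (simp add: powr_powr)
  also have "\<dots> = (m ^ ?L) powr (1 / real ?L)" using m0 by (simp add: powr_realpow)
  also have "\<dots> \<le> (\<sigma>\<^sup>2) powr (1 / real ?L)" using mL m0 by (intro powr_mono2) auto
  also have "(\<sigma>\<^sup>2) powr (1 / real ?L) = \<sigma> powr (2 / real ?L)"
  proof -
    have "\<sigma>\<^sup>2 = \<sigma> powr (real 2)" using sp by (simp add: powr_realpow)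
    then show ?thesis by (simp add: powr_powr)
  qed
  finally have "m \<le> \<sigma> powr (2 / real ?L)" .
  then show ?thesis using bal j0 by fastforce
qed




lemma unb_le:
  assumes tree: "mode_tree N T" and nu: "\<nu> \<in> interior T" and r: "r < R \<nu>"
    and j: "j \<in> insert \<nu> (children T \<nu>)" and k: "k \<in> insert \<nu> (children T \<nu>)"
  shows "\<bar>qf N T R D W \<nu> r j 0 - qf N T R D W \<nu> r k 0\<bar> \<le> unbalancedness N T R D (W 0)"
proof -
  let ?LC = "LC_sqnorms N T R D (W 0)"
  have mem: "qf N T R D W \<nu> r j' 0 \<in> ?LC \<nu> r" if "j' \<in> insert \<nu> (children T \<nu>)" for j'
    using that by (auto simp: qf_def LC_sqnorms_def)
  let ?S = "{\<bar>a - b\<bar> | \<nu> r a b. \<nu> \<in> interior T \<and> r < R \<nu> \<and> a \<in> ?LC \<nu> r \<and> b \<in> ?LC \<nu> r}"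
  have inS: "\<bar>qf N T R D W \<nu> r j 0 - qf N T R D W \<nu> r k 0\<bar> \<in> ?S"
    using mem[OF j] mem[OF k] nu r by blast
  let ?U = "\<Union>\<mu>\<in>interior T. \<Union>r'\<in>{..<R \<mu>}. ?LC \<mu> r'"
  have finI: "finite (interior T)" using T_fin[OF tree] by (rule finite_subset[rotated]) (auto simp: interior_def)
  have finLC: "finite (?LC \<mu> r')" for \<mu> r' using children_fin[OF tree] by (simp add: LC_sqnorms_def)
  have finU: "finite ?U" using finI finLC by auto
  have "?S \<subseteq> (\<lambda>(a, b). \<bar>a - b\<bar>) ` (?U \<times> ?U)" by (fastforce simp: image_iff)
  then have "finite ?S" using finU by (meson finite_SigmaI finite_imageI finite_subset)
  then show ?thesis using inS unfolding unbalancedness_def by (rule Max_ge)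
qed

theorem theorem2:
  fixes N :: nat and D :: "nat \<Rightarrow> nat" and T :: "nat set set" and R :: "nat set \<Rightarrow> nat"
    and L :: "((nat \<Rightarrow> nat) \<Rightarrow> real) \<Rightarrow> real"
    and G :: "((nat \<Rightarrow> nat) \<Rightarrow> real) \<Rightarrow> ((nat \<Rightarrow> nat) \<Rightarrow> real)"
    and W :: "real \<Rightarrow> nat set \<Rightarrow> nat \<Rightarrow> nat \<Rightarrow> real"
    and \<epsilon> :: real and \<nu> :: "nat set" and r :: nat and t :: real
  assumes tree: "mode_tree N T"
    and dims: "\<forall>n\<in>{1..N}. 0 < D n"
    and ranks: "\<forall>\<mu>\<in>interior T. 0 < R \<mu>"
    and L_nonneg: "\<forall>X. 0 \<le> L X"
    and L_grad: "\<forall>X. has_tgrad N D L (G X) X"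
    and L_smooth: "locally_smooth_grad N D G"
    and flow: "gradient_flow N D T R L W"
    and eps: "0 \<le> \<epsilon>" "unbalancedness N T R D (W 0) = \<epsilon>"
    and node: "\<nu> \<in> interior T" "r < R \<nu>"
    and time: "0 \<le> t"
    and pos: "0 < sigma N T R D (W t) \<nu> r"
  shows "\<exists>d. ((\<lambda>s. sigma N T R D (W s) \<nu> r) has_real_derivative d) (at t within {0..}) \<and>
    (let \<sigma> = sigma N T R D (W t) \<nu> r;
         Lv = card (children T \<nu>) + 1;
         g = tinner N D (\<lambda>i. - G (end_tensor N D T R (W t)) i) (E_tensor N D T R (W t) \<nu> r)
     in (0 \<le> g \<longrightarrow>
           \<sigma>\<^sup>2 / (\<sigma> powr (2 / real Lv) + \<epsilon>) * real Lv * g \<le> d \<and>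
           d \<le> (\<sigma> powr (2 / real Lv) + \<epsilon>) ^ (Lv - 1) * real Lv * g) \<and>
        (g < 0 \<longrightarrow>
           (\<sigma> powr (2 / real Lv) + \<epsilon>) ^ (Lv - 1) * real Lv * g \<le> d \<and>
           d \<le> \<sigma>\<^sup>2 / (\<sigma> powr (2 / real Lv) + \<epsilon>) * real Lv * g))"


proof -
  have nuT: "\<nu> \<in> T" using node by (simp add: interior_def)
  let ?J = "insert \<nu> (children T \<nu>)"
  let ?q = "\<lambda>j s. qf N T R D W \<nu> r j s"
  have nnot: "\<nu> \<notin> children T \<nu>" using children_sub by blast
  have finJ: "finite ?J" using children_fin[OF tree] by simp
  have cardJ: "card ?J = card (children T \<nu>) + 1" using children_fin[OF tree] nnot by simp
  have sig_eq: "sigma N T R D (W s) \<nu> r = (\<Prod>j\<in>?J. sqrt (?q j s))" for s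
  proof -
    have "(\<Prod>\<mu>\<in>children T \<nu>. sqrt (col_sqnorm R D (W s) \<mu> r)) = (\<Prod>j\<in>children T \<nu>. sqrt (?q j s))"
      using nnot by (intro prod.cong) (auto simp: qf_def)
    then show ?thesis using nnot children_fin[OF tree] by (simp add: sigma_def qf_def)
  qed
  have qnn: "0 \<le> ?q j s" for j s by (simp add: qf_def row_sqnorm_def col_sqnorm_def sum_nonneg)
  define q where "q j = ?q j t" for j
  define \<sigma> where "\<sigma> = sigma N T R D (W t) \<nu> r"
  have sp: "0 < \<sigma>" using pos by (simp add: \<sigma>_def)
  have qpos: "\<forall>j\<in>?J. 0 < q j"
  proof
    fix j assume j: "j \<in> ?J"
    show "0 < q j"
    proof (rule ccontr)
      assume "\<not> 0 < q j"
      then have "q j = 0" using qnn[of j t] by (simp add: q_def)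
      then have "(\<Prod>j\<in>?J. sqrt (?q j t)) = 0" using finJ j by (auto simp: q_def intro!: prod_zero)
      then show False using sp sig_eq[of t] by (simp add: \<sigma>_def)
    qed
  qed
  define X where "X = end_tensor N D T R (W t)"
  define g where "g = tinner N D (\<lambda>i. - G X i) (E_tensor N D T R (W t) \<nu> r)"
  have Zeq: "tinner N D (G X) (Z N T R D (W t) \<nu> r) = - \<sigma> * g"
  proof -
    have "Z N T R D (W t) \<nu> r = (\<lambda>i. \<sigma> * E_tensor N D T R (W t) \<nu> r i)"
      using E_id[where R=R and D=D, OF tree node(1) node(2)] sp by (auto simp: \<sigma>_def)
    then have "tinner N D (G X) (Z N T R D (W t) \<nu> r) = \<sigma> * tinner N D (G X) (E_tensor N D T R (W t) \<nu> r)"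
      by (simp add: tinner_scale)
    moreover have "g = - tinner N D (G X) (E_tensor N D T R (W t) \<nu> r)"
      by (simp add: g_def tinner_def sum_negf)
    ultimately show ?thesis by simp
  qed
  have qd: "((\<lambda>s. ?q j s) has_real_derivative (2 * \<sigma> * g)) (at t within {0..})" if j: "j \<in> ?J" for j
    using q_deriv[OF tree node(1) node(2) L_grad flow time j] Zeq by (simp add: X_def mult.assoc)
  define dj where "dj j = inverse (sqrt (q j)) / 2 * (2 * \<sigma> * g)" for j
  have sd: "((\<lambda>s. sqrt (?q j s)) has_real_derivative dj j) (at t within {0..})" if j: "j \<in> ?J" for j
  proof -
    have qj: "0 < ?q j t" using qpos j unfolding q_def by blast
    show ?thesis using DERIV_chain2[OF DERIV_real_sqrt[OF qj] qd[OF j]] by (simp add: dj_def q_def)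
  qed
  have pd: "((\<lambda>s. \<Prod>j\<in>?J. sqrt (?q j s)) has_derivative
      (\<lambda>y. \<Sum>j\<in>?J. dj j * y * (\<Prod>k\<in>?J - {j}. sqrt (?q k t)))) (at t within {0..})"
    using has_derivative_prod[of ?J "\<lambda>j s. sqrt (?q j s)" "\<lambda>j y. dj j * y"] sd
    by (simp add: has_field_derivative_def)
  define d where "d = (\<Sum>j\<in>?J. g * prod q (?J - {j}))"
  have each: "dj j * (\<Prod>k\<in>?J - {j}. sqrt (?q k t)) = g * prod q (?J - {j})" if j: "j \<in> ?J" for j
  proof -
    let ?Ps = "\<Prod>k\<in>?J - {j}. sqrt (q k)"
    have s: "\<sigma> = sqrt (q j) * ?Ps" using sig_eq[of t] finJ j by (simp add: \<sigma>_def q_def prod.remove)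
    have "0 < q j" using qpos j by blast
    then have sq: "sqrt (q j) > 0" by simp
    have ps2: "?Ps * ?Ps = prod q (?J - {j})"
    proof -
      have "?Ps * ?Ps = ?Ps ^ 2" by (simp add: power2_eq_square)
      also have "\<dots> = (\<Prod>k\<in>?J - {j}. (sqrt (q k))\<^sup>2)" by (simp add: prod_power_distrib)
      also have "\<dots> = prod q (?J - {j})" using qnn by (intro prod.cong) (auto simp: q_def)
      finally show ?thesis .
    qed
    have h: "dj j * ?Ps = g * (?Ps * ?Ps)" using sq unfolding dj_def s by (simp add: field_simps)
    have e1: "(\<Prod>k\<in>?J - {j}. sqrt (?q k t)) = ?Ps" by (simp add: q_def)
    show ?thesis unfolding e1 using h ps2 by metis
  qed
  have "(\<lambda>y. \<Sum>j\<in>?J. dj j * y * (\<Prod>k\<in>?J - {j}. sqrt (?q k t))) = (*) d"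
  proof
    fix y
    have "(\<Sum>j\<in>?J. dj j * y * (\<Prod>k\<in>?J - {j}. sqrt (?q k t))) = y * (\<Sum>j\<in>?J. dj j * (\<Prod>k\<in>?J - {j}. sqrt (?q k t)))"
      by (simp add: sum_distrib_left mult_ac)
    also have "(\<Sum>j\<in>?J. dj j * (\<Prod>k\<in>?J - {j}. sqrt (?q k t))) = d" unfolding d_def by (rule sum.cong[OF refl each])
    finally show "(\<Sum>j\<in>?J. dj j * y * (\<Prod>k\<in>?J - {j}. sqrt (?q k t))) = d * y" by simp
  qed
  then have deriv: "((\<lambda>s. sigma N T R D (W s) \<nu> r) has_real_derivative d) (at t within {0..})"
    using pd unfolding has_field_derivative_def sig_eq by simp
  have s2: "\<sigma>\<^sup>2 = prod q ?J"
  proof -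
    have "\<sigma>\<^sup>2 = (\<Prod>j\<in>?J. (sqrt (q j))\<^sup>2)" using sig_eq[of t] by (simp add: \<sigma>_def q_def prod_power_distrib)
    also have "\<dots> = prod q ?J" using qnn by (intro prod.cong) (auto simp: q_def)
    finally show ?thesis .
  qed
  have bal: "\<forall>j\<in>?J. \<forall>k\<in>?J. \<bar>q j - q k\<bar> \<le> \<epsilon>"
  proof (intro ballI)
    fix j k assume j: "j \<in> ?J" and k: "k \<in> ?J"
    have "q j - q k = ?q j 0 - ?q k 0"
      unfolding q_def by (rule conserve[where R=R and D=D and W=W, OF tree node(1) node(2) L_grad flow time j k])
    moreover have "\<bar>?q j 0 - ?q k 0\<bar> \<le> \<epsilon>"
      using unb_le[where R=R and D=D and W=W, OF tree node(1) node(2) j k] eps(2) by simp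
    ultimately show "\<bar>q j - q k\<bar> \<le> \<epsilon>" by simp
  qed
  have qS: "\<forall>j\<in>?J. q j \<le> \<sigma> powr (2 / real (card ?J)) + \<epsilon>"
    by (rule min_bound[OF finJ _ qpos bal sp s2]) simp
  note fb = final_bounds[OF finJ qpos qS, of g]
  show ?thesis
  proof (intro exI conjI)
    show "((\<lambda>s. sigma N T R D (W s) \<nu> r) has_real_derivative d) (at t within {0..})" by (rule deriv)
    show "let \<sigma> = sigma N T R D (W t) \<nu> r; Lv = card (children T \<nu>) + 1;
         g = tinner N D (\<lambda>i. - G (end_tensor N D T R (W t)) i) (E_tensor N D T R (W t) \<nu> r)
     in (0 \<le> g \<longrightarrow>
           \<sigma>\<^sup>2 / (\<sigma> powr (2 / real Lv) + \<epsilon>) * real Lv * g \<le> d \<and>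
           d \<le> (\<sigma> powr (2 / real Lv) + \<epsilon>) ^ (Lv - 1) * real Lv * g) \<and>
        (g < 0 \<longrightarrow>
           (\<sigma> powr (2 / real Lv) + \<epsilon>) ^ (Lv - 1) * real Lv * g \<le> d \<and>
           d \<le> \<sigma>\<^sup>2 / (\<sigma> powr (2 / real Lv) + \<epsilon>) * real Lv * g)"
      using fb unfolding Let_def d_def s2[symmetric] cardJ g_def X_def \<sigma>_def by simp
  qed
qed


end
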